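(* Let $w$ be a Coxeter element of an irreducible euclidean Coxeter group $W$ acting on the euclidean space $E$ with vector space of translations $V$. Then $w$ is a hyperbolic isometry of $E$, its move-set is a nonlinear affine hyperplane in $V$, and its min-set is a line in $E$. Moreover, any factorization of $w$ as the product of the elements of a simple system is a minimum length reflection factorization of $w$.
   Context: $W$ is generated by the reflections of an $n$-dimensional euclidean space $E$ in the facets of a euclidean $n$-simplex with dihedral angles submultiples of $\pi$, acting properly and cocompactly; a simple system is the set of reflections in the facets of a chamber (image of the simplex), and a Coxeter element is the product of the elements of a simple system in some order. For an isometry $u$ of $E$: its move-set $\mathrm{Mov}(u)\subset V$ is the set of vectors $\lambda$ with $u(x)=x+\lambda$ for some $x\in E$ (an affine subspace of $V$); $u$ is hyperbolic if it has no fixed points (equivalently $\mathrm{Mov}(u)$ does not contain $0$, i.e. is a nonlinear affine subspace); its min-set $\mathrm{Min}(u)$ is the set of points moved by the shortest vector in $\mathrm{Mov}(u)$. Reflection length refers to factorization into reflections of $E$. *)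

theory Defs
  imports "HOL-Analysis.Analysis"
begin

text \<open>Euclidean space E is modelled by a type 'a of class euclidean_space; its
  vector space of translations V is the same type, n = DIM('a).\<close>

definition refl_in :: "'a::euclidean_space set \<Rightarrow> 'a \<Rightarrow> 'a" where
  "refl_in H x = 2 *\<^sub>R closest_point H x - x"

definition affine_hyperplane :: "'a::euclidean_space set \<Rightarrow> bool" where
  "affine_hyperplane H \<longleftrightarrow> affine H \<and> aff_dim H = int DIM('a) - 1"

definition is_reflection :: "('a::euclidean_space \<Rightarrow> 'a) \<Rightarrow> bool" where
  "is_reflection r \<longleftrightarrow> (\<exists>H. affine_hyperplane H \<and> r = refl_in H)"

text \<open>Product of a list of maps (leftmost factor applied last).\<close>
definition prod_maps :: "('a \<Rightarrow> 'a) list \<Rightarrow> 'a \<Rightarrow> 'a" where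
  "prod_maps fs = foldr (\<circ>) fs id"

definition is_simplex :: "(nat \<Rightarrow> 'a::euclidean_space) \<Rightarrow> bool" where
  "is_simplex v \<longleftrightarrow> inj_on v {..DIM('a)} \<and> \<not> affine_dependent (v ` {..DIM('a)})"

definition simplex_set :: "(nat \<Rightarrow> 'a::euclidean_space) \<Rightarrow> 'a set" where
  "simplex_set v = convex hull (v ` {..DIM('a)})"

definition facet :: "(nat \<Rightarrow> 'a::euclidean_space) \<Rightarrow> nat \<Rightarrow> 'a set" where
  "facet v i = convex hull (v ` ({..DIM('a)} - {i}))"

definition facet_hyperplane :: "(nat \<Rightarrow> 'a::euclidean_space) \<Rightarrow> nat \<Rightarrow> 'a set" where
  "facet_hyperplane v i = affine hull (facet v i)"

definition inward_normal :: "(nat \<Rightarrow> 'a::euclidean_space) \<Rightarrow> nat \<Rightarrow> 'a" where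
  "inward_normal v i = sgn (v i - closest_point (facet_hyperplane v i) (v i))"

definition dihedral_angle :: "(nat \<Rightarrow> 'a::euclidean_space) \<Rightarrow> nat \<Rightarrow> nat \<Rightarrow> real" where
  "dihedral_angle v i j = arccos (- (inward_normal v i \<bullet> inward_normal v j))"

text \<open>All dihedral angles are submultiples of pi (only meaningful for n >= 2;
  for n = 1 there are no dihedral angles).\<close>
definition angles_submultiples_of_pi :: "(nat \<Rightarrow> 'a::euclidean_space) \<Rightarrow> bool" where
  "angles_submultiples_of_pi v \<longleftrightarrow>
     (\<forall>i\<le>DIM('a). \<forall>j\<le>DIM('a). i \<noteq> j \<longrightarrow> DIM('a) \<ge> 2 \<longrightarrow>
        (\<exists>m::nat. m \<ge> 2 \<and> dihedral_angle v i j = pi / real m))"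

text \<open>The group W generated by the reflections in the facets of the simplex
  (reflections are involutions, so the generated monoid is the generated group).\<close>
inductive_set refl_group :: "(nat \<Rightarrow> 'a::euclidean_space) \<Rightarrow> ('a \<Rightarrow> 'a) set"
  for v :: "nat \<Rightarrow> 'a" where
  id_in: "id \<in> refl_group v"
| step: "i \<le> DIM('a) \<Longrightarrow> g \<in> refl_group v \<Longrightarrow> refl_in (facet_hyperplane v i) \<circ> g \<in> refl_group v"

definition acts_properly :: "('a::euclidean_space \<Rightarrow> 'a) set \<Rightarrow> bool" where
  "acts_properly W \<longleftrightarrow> (\<forall>K. compact K \<longrightarrow> finite {g \<in> W. g ` K \<inter> K \<noteq> {}})"

definition acts_cocompactly :: "('a::euclidean_space \<Rightarrow> 'a) set \<Rightarrow> bool" where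
  "acts_cocompactly W \<longleftrightarrow> (\<exists>K. compact K \<and> (\<Union>g\<in>W. g ` K) = UNIV)"

text \<open>Simple system of the chamber g(simplex), g \<in> W: the reflections in its
  facets g(facet i).\<close>
definition simple_refl :: "(nat \<Rightarrow> 'a::euclidean_space) \<Rightarrow> ('a \<Rightarrow> 'a) \<Rightarrow> nat \<Rightarrow> 'a \<Rightarrow> 'a" where
  "simple_refl v g i = refl_in (affine hull (g ` facet v i))"

definition simple_factorization ::
  "(nat \<Rightarrow> 'a::euclidean_space) \<Rightarrow> ('a \<Rightarrow> 'a) \<Rightarrow> ('a \<Rightarrow> 'a) \<Rightarrow> nat list \<Rightarrow> bool" where
  "simple_factorization v w g \<sigma> \<longleftrightarrow>
     g \<in> refl_group v \<and> distinct \<sigma> \<and> set \<sigma> = {..DIM('a)} \<and>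
     w = prod_maps (map (simple_refl v g) \<sigma>)"

definition coxeter_element :: "(nat \<Rightarrow> 'a::euclidean_space) \<Rightarrow> ('a \<Rightarrow> 'a) \<Rightarrow> bool" where
  "coxeter_element v w \<longleftrightarrow> (\<exists>g \<sigma>. simple_factorization v w g \<sigma>)"

definition Mov :: "('a::euclidean_space \<Rightarrow> 'a) \<Rightarrow> 'a set" where
  "Mov u = {d. \<exists>x. u x = x + d}"

definition hyperbolic :: "('a::euclidean_space \<Rightarrow> 'a) \<Rightarrow> bool" where
  "hyperbolic u \<longleftrightarrow> (\<forall>x. u x \<noteq> x)"

definition Min_set :: "('a::euclidean_space \<Rightarrow> 'a) \<Rightarrow> 'a set" where
  "Min_set u = {x. \<forall>d\<in>Mov u. norm (u x - x) \<le> norm d}"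

definition is_line :: "'a::euclidean_space set \<Rightarrow> bool" where
  "is_line L \<longleftrightarrow> affine L \<and> aff_dim L = 1"

end

theory Submission
  imports Defs
begin

definition lrefl :: "'a::euclidean_space \<Rightarrow> 'a \<Rightarrow> 'a" where
  "lrefl c x = x - (2 * (c \<bullet> x)) *\<^sub>R c"

definition arefl :: "'a::euclidean_space \<Rightarrow> real \<Rightarrow> 'a \<Rightarrow> 'a" where
  "arefl c b x = x - (2 * (c \<bullet> x - b)) *\<^sub>R c"

lemma lrefl_eq: "lrefl c x = x - (2 * (c \<bullet> x)) *\<^sub>R c"
  by (simp add: lrefl_def)

lemma linear_lrefl: "linear (lrefl c)"
  unfolding lrefl_def by (auto simp: linear_iff inner_add_right algebra_simps)

lemma lrefl_inner: "norm c = 1 \<Longrightarrow> lrefl c x \<bullet> lrefl c y = x \<bullet> y"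
proof -
  assume "norm c = 1"
  then have cc: "c \<bullet> c = 1" by (simp add: norm_eq_1)
  show ?thesis unfolding lrefl_def
    by (simp add: inner_diff_left inner_diff_right cc inner_commute algebra_simps)
qed

lemma lrefl_invol: "norm c = 1 \<Longrightarrow> lrefl c (lrefl c x) = x"
proof -
  assume "norm c = 1"
  then have cc: "c \<bullet> c = 1" by (simp add: norm_eq_1)
  show ?thesis unfolding lrefl_def
    by (simp add: inner_diff_right cc algebra_simps)
qed

lemma arefl_lrefl: "arefl c b x = lrefl c x + (2 * b) *\<^sub>R c"
  unfolding arefl_def lrefl_def by (simp add: algebra_simps)

lemma prod_maps_Cons[simp]: "prod_maps (f # fs) = f \<circ> prod_maps fs"
  by (simp add: prod_maps_def)
lemma prod_maps_Nil[simp]: "prod_maps [] = id"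
  by (simp add: prod_maps_def)

lemma linear_prod_lrefl: "linear (prod_maps (map lrefl cs))"
proof (induction cs)
  case Nil then show ?case by (simp add: linearI)
next
  case (Cons c cs) then show ?case using linear_compose[OF Cons.IH linear_lrefl[of c]] by (simp add: comp_def)
qed

lemma inner_prod_lrefl: "(\<forall>c\<in>set cs. norm c = 1) \<Longrightarrow>
   prod_maps (map lrefl cs) x \<bullet> prod_maps (map lrefl cs) y = x \<bullet> y"
  by (induction cs) (auto simp: lrefl_inner)

lemma mov_prod_lrefl: "prod_maps (map lrefl cs) y - y \<in> span (set cs)"
proof (induction cs)
  case Nil then show ?case by (simp add: span_zero)
next
  case (Cons c cs)
  let ?L = "prod_maps (map lrefl cs)"
  have h1: "prod_maps (map lrefl (c # cs)) y - y = (?L y - y) - (2 * (c \<bullet> ?L y)) *\<^sub>R c"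
    by (simp add: lrefl_eq algebra_simps)
  have h2: "?L y - y \<in> span (set (c # cs))"
    using Cons span_mono[of "set cs" "set (c#cs)"] by auto
  have h3: "(2 * (c \<bullet> ?L y)) *\<^sub>R c \<in> span (set (c # cs))"
    by (simp add: span_base span_mul)
  show ?case by (subst h1) (rule span_diff[OF h2 h3])
qed

lemma carter:
  assumes "distinct cs" "independent (set cs)" "prod_maps (map lrefl cs) y = y"
  shows "\<forall>c\<in>set cs. c \<bullet> y = 0"
  using assms
proof (induction cs)
  case Nil then show ?case by simp
next
  case (Cons c cs)
  let ?L = "prod_maps (map lrefl cs)"
  have eq: "?L y - (2 * (c \<bullet> ?L y)) *\<^sub>R c = y" using Cons.prems(3) by (metis lrefl_eq o_apply list.simps(9) prod_maps_Cons)
  have ind: "independent (set cs)" using Cons.prems(2)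
    by (meson dependent_mono set_subset_Cons)
  have notin: "c \<notin> span (set cs)" using Cons.prems(1,2)
    by (simp add: independent_insert)
  have "c \<bullet> ?L y = 0"
  proof (rule ccontr)
    assume ne: "c \<bullet> ?L y \<noteq> 0"
    have "?L y - y \<in> span (set cs)" by (rule mov_prod_lrefl)
    moreover have "?L y - y = (2 * (c \<bullet> ?L y)) *\<^sub>R c" using eq by (simp add: algebra_simps)
    ultimately have "(inverse (2 * (c \<bullet> ?L y))) *\<^sub>R ((2 * (c \<bullet> ?L y)) *\<^sub>R c) \<in> span (set cs)"
      by (metis span_mul)
    then have "c \<in> span (set cs)" using ne by simp
    with notin show False by simp
  qed
  then have Ly: "?L y = y" using eq by simp
  have "\<forall>c\<in>set cs. c \<bullet> y = 0" using Cons.IH[OF _ ind Ly] Cons.prems(1) by simp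
  moreover have "c \<bullet> y = 0" using \<open>c \<bullet> ?L y = 0\<close> Ly by simp
  ultimately show ?case by simp
qed

lemma closest_point_hyperplane:
  assumes "norm c = 1"
  shows "closest_point {x. c \<bullet> x = b} x = x - (c \<bullet> x - b) *\<^sub>R c"
proof -
  have cc: "c \<bullet> c = 1" using assms by (simp add: norm_eq_1)
  define k where "k = c \<bullet> x - b"
  define q where "q = x - k *\<^sub>R c"
  have qin: "q \<in> {x. c \<bullet> x = b}" by (simp add: q_def k_def inner_diff_right cc)
  have "\<forall>z\<in>{x. c \<bullet> x = b}. dist x q \<le> dist x z"
  proof
    fix z assume z: "z \<in> {x. c \<bullet> x = b}"
    define d where "d = q - z"
    have o: "c \<bullet> d = 0" using z qin by (simp add: inner_diff_right d_def)
    have e: "x - z = k *\<^sub>R c + d" by (simp add: d_def q_def)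
    have e2: "x - q = k *\<^sub>R c" by (simp add: q_def)
    have "(k *\<^sub>R c + d) \<bullet> (k *\<^sub>R c + d) = k*k + d \<bullet> d"
      using o cc by (simp add: inner_add_left inner_add_right inner_commute)
    moreover have "(k *\<^sub>R c) \<bullet> (k *\<^sub>R c) = k * k" using cc by simp
    moreover have "0 \<le> d \<bullet> d" by simp
    ultimately have "(x - q) \<bullet> (x - q) \<le> (x - z) \<bullet> (x - z)"
      unfolding e e2 by linarith
    then show "dist x q \<le> dist x z"
      by (simp add: dist_norm norm_le)
  qed
  then show ?thesis
    using closest_point_unique[OF convex_hyperplane closed_hyperplane qin] by (simp add: q_def k_def)
qed

lemma hyperplane_refl:
  fixes H :: "'a::euclidean_space set"
  assumes "affine_hyperplane H"
  shows "\<exists>c b. norm c = 1 \<and> H = {x. c \<bullet> x = b} \<and> refl_in H = arefl c b"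
proof -
  from assms have "affine H" "aff_dim H = int DIM('a) - 1" by (auto simp: affine_hyperplane_def)
  then have "\<exists>a b. a \<noteq> 0 \<and> affine hull H = {x. a \<bullet> x = b}"
  proof -
    have "int (DIM('a) - 1) = int DIM('a) - 1" using DIM_positive[where 'a='a] by (simp add: of_nat_diff)
    then show ?thesis using aff_dim_eq_hyperplane[of H] \<open>aff_dim H = int DIM('a) - 1\<close> by simp
  qed
  then obtain a b where ab: "a \<noteq> 0" "affine hull H = {x. a \<bullet> x = b}"
    by blast
  have "affine hull H = H" using \<open>affine H\<close> by (rule hull_same)
  then have H: "H = {x. a \<bullet> x = b}" using ab by simp
  define c where "c = a /\<^sub>R norm a"
  define b' where "b' = b / norm a"
  have nc: "norm c = 1" using ab by (simp add: c_def)
  have na: "norm a \<noteq> 0" using ab by simp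
  have "(c \<bullet> x = b') \<longleftrightarrow> (a \<bullet> x = b)" for x
    using na by (simp add: c_def b'_def field_simps)
  then have H': "H = {x. c \<bullet> x = b'}" unfolding H by blast
  have "refl_in H x = arefl c b' x" for x
    unfolding refl_in_def H' closest_point_hyperplane[OF nc] arefl_def
    by (simp add: scaleR_diff_right scaleR_2)
  then have "refl_in H = arefl c b'" by (rule ext)
  with nc H' show ?thesis by blast
qed

lemma prod_arefl_affine:
  "prod_maps (map (\<lambda>cb. arefl (fst cb) (snd cb)) cbs) x =
     prod_maps (map lrefl (map fst cbs)) x + prod_maps (map (\<lambda>cb. arefl (fst cb) (snd cb)) cbs) 0"
proof (induction cbs arbitrary: x)
  case Nil then show ?case by simp
next
  case (Cons cb cbs)
  have l: "lrefl c (u + v) = lrefl c u + lrefl c v" for c u v :: 'a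
    using linear_lrefl[of c] by (simp add: linear_add)
  show ?case using Cons[of x] Cons[of 0] by (simp add: arefl_lrefl l)
qed

lemma mov_prod_arefl:
  "prod_maps (map (\<lambda>cb. arefl (fst cb) (snd cb)) cbs) x - x \<in> span (fst ` set cbs)"
proof (induction cbs)
  case Nil then show ?case by (simp add: span_zero)
next
  case (Cons cb cbs)
  let ?F = "prod_maps (map (\<lambda>cb. arefl (fst cb) (snd cb)) cbs)"
  have h1: "prod_maps (map (\<lambda>cb. arefl (fst cb) (snd cb)) (cb # cbs)) x - x
      = (?F x - x) - (2 * (fst cb \<bullet> ?F x - snd cb)) *\<^sub>R fst cb"
    by (simp add: arefl_def algebra_simps)
  have h2: "?F x - x \<in> span (fst ` set (cb # cbs))"
    using Cons span_mono[of "fst ` set cbs" "fst ` set (cb#cbs)"] by auto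
  have h3: "(2 * (fst cb \<bullet> ?F x - snd cb)) *\<^sub>R fst cb \<in> span (fst ` set (cb # cbs))"
    by (simp add: span_base span_mul)
  show ?case by (subst h1) (rule span_diff[OF h2 h3])
qed

lemma refl_list:
  assumes "\<forall>r\<in>set rs. is_reflection (r::'a::euclidean_space \<Rightarrow> 'a)"
  shows "\<exists>cbs. rs = map (\<lambda>cb. arefl (fst cb) (snd cb)) cbs \<and> (\<forall>cb\<in>set cbs. norm (fst cb) = 1)"
  using assms
proof (induction rs)
  case Nil then show ?case by simp
next
  case (Cons r rs)
  then obtain cbs where cbs: "rs = map (\<lambda>cb. arefl (fst cb) (snd cb)) cbs" "\<forall>cb\<in>set cbs. norm (fst cb) = 1"
    by auto
  from Cons.prems obtain H where "affine_hyperplane H" "r = refl_in H"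
    by (auto simp: is_reflection_def)
  then obtain c b where "norm c = 1" "r = arefl c b" using hyperplane_refl by blast
  then show ?case using cbs by (intro exI[of _ "(c,b) # cbs"]) auto
qed

lemma orth_span_UNIV:
  fixes y :: "'a::euclidean_space"
  assumes "\<forall>c\<in>S. c \<bullet> y = 0" "span S = UNIV"
  shows "y = 0"
proof -
  have "span S \<subseteq> {x. x \<bullet> y = 0}"
    by (rule span_minimal) (use assms(1) subspace_hyperplane2 in auto)
  moreover have "y \<in> span S" using assms(2) by simp
  ultimately have "y \<bullet> y = 0" by blast
  then show ?thesis by simp
qed

lemma affmap_image: "(\<lambda>x. G x + t) ` S = (+) t ` (G ` S)" for G :: "'a::euclidean_space \<Rightarrow> 'a"
  by (simp add: image_image add.commute[of _ t])

lemma affine_map_hull: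
  fixes G :: "'a::euclidean_space \<Rightarrow> 'a"
  assumes "linear G"
  shows "affine hull ((\<lambda>x. G x + t) ` S) = (\<lambda>x. G x + t) ` (affine hull S)"
proof -
  have "affine hull ((+) t ` (G ` S)) = (+) t ` (affine hull (G ` S))"
    using affine_hull_translation[of t "G ` S"] by simp
  also have "affine hull (G ` S) = G ` (affine hull S)"
    using affine_hull_linear_image[of G S] assms linear_conv_bounded_linear by metis
  finally show ?thesis by (simp add: affmap_image)
qed

lemma aff_dim_affmap:
  fixes G :: "'a::euclidean_space \<Rightarrow> 'a"
  assumes "linear G" "inj G"
  shows "aff_dim ((\<lambda>x. G x + t) ` S) = aff_dim S"
  unfolding affmap_image aff_dim_translation_eq using assms by simp

lemma facet_geom:
  fixes v :: "nat \<Rightarrow> 'a::euclidean_space" and G :: "'a \<Rightarrow> 'a"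
  assumes sv: "is_simplex v" and G: "linear G" "inj G" and i: "i \<le> DIM('a)"
  shows "affine_hyperplane ((\<lambda>x. G x + t) ` (affine hull (v ` ({..DIM('a)} - {i}))))"
    and "\<And>k. k \<le> DIM('a) \<Longrightarrow> k \<noteq> i \<Longrightarrow> G (v k) + t \<in> (\<lambda>x. G x + t) ` (affine hull (v ` ({..DIM('a)} - {i})))"
    and "G (v i) + t \<notin> (\<lambda>x. G x + t) ` (affine hull (v ` ({..DIM('a)} - {i})))"
proof -
  let ?I = "{..DIM('a)}"
  let ?S = "v ` (?I - {i})"
  let ?f = "\<lambda>x. G x + t"
  have inj: "inj_on v ?I" and ind: "\<not> affine_dependent (v ` ?I)"
    using sv by (auto simp: is_simplex_def)
  have indS: "\<not> affine_dependent ?S"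
    by (rule affine_independent_subset[OF ind]) auto
  have cardS: "card ?S = DIM('a)"
  proof -
    have "inj_on v (?I - {i})" using inj by (rule inj_on_subset) auto
    then have "card ?S = card (?I - {i})" by (rule card_image)
    also have "\<dots> = DIM('a)" using i by simp
    finally show ?thesis .
  qed
  have ad: "aff_dim (?f ` (affine hull ?S)) = int DIM('a) - 1"
    using aff_dim_affmap[OF G] aff_dim_affine_independent[OF indS] cardS
    by (simp add: aff_dim_affine_hull)
  have aff: "affine (?f ` (affine hull ?S))"
    using affine_map_hull[OF G(1), of t ?S] by (metis affine_affine_hull)
  show "affine_hyperplane (?f ` (affine hull ?S))"
    using ad aff by (simp add: affine_hyperplane_def)
  show "G (v k) + t \<in> ?f ` (affine hull ?S)" if "k \<le> DIM('a)" "k \<noteq> i" for k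
  proof -
    have "v k \<in> affine hull ?S" using that by (intro hull_inc) auto
    then show ?thesis by blast
  qed
  have eq: "v ` ?I - {v i} = ?S" using inj i by (auto simp: inj_on_def)
  have "v i \<notin> affine hull (v ` ?I - {v i})"
    using ind i unfolding affine_dependent_def by auto
  then have "v i \<notin> affine hull ?S" using eq by simp
  show "G (v i) + t \<notin> ?f ` (affine hull ?S)"
  proof
    assume "G (v i) + t \<in> ?f ` (affine hull ?S)"
    then obtain x where x: "x \<in> affine hull ?S" "G (v i) + t = G x + t" by auto
    then have "G (v i) = G x" by simp
    then have "v i = x" using G(2) by (simp add: inj_eq)
    with x(1) \<open>v i \<notin> affine hull ?S\<close> show False by simp
  qed
qed

lemma facet_hull_eq:
  fixes G :: "'a::euclidean_space \<Rightarrow> 'a"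
  assumes "linear G"
  shows "affine hull ((\<lambda>x. G x + t) ` facet v i) = (\<lambda>x. G x + t) ` (affine hull (v ` ({..DIM('a)} - {i})))"
  using affine_map_hull[OF assms, of t] by (simp add: facet_def)

lemma refl_group_affine:
  fixes v :: "nat \<Rightarrow> 'a::euclidean_space"
  assumes sv: "is_simplex v" and g: "g \<in> refl_group v"
  shows "\<exists>G t. linear G \<and> inj G \<and> g = (\<lambda>x. G x + t)"
  using g
proof (induction rule: refl_group.induct)
  case id_in
  show ?case by (intro exI[of _ "\<lambda>x. x"] exI[of _ 0]) (auto simp: linearI inj_def)
next
  case (step i g)
  then obtain G t where Gt: "linear G" "inj G" "g = (\<lambda>x. G x + t)" by blast
  have lid: "linear (\<lambda>x::'a. x)" by (simp add: linearI)
  have idi: "inj (\<lambda>x::'a. x)" by (simp add: inj_def)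
  have "facet_hyperplane v i = (\<lambda>x. x + 0) ` (affine hull (v ` ({..DIM('a)} - {i})))"
    using facet_hull_eq[OF lid, of 0 v i] by (simp add: facet_hyperplane_def)
  then have "affine_hyperplane (facet_hyperplane v i)"
    using facet_geom(1)[OF sv lid idi step.hyps(1), of 0] by simp
  then obtain c b where cb: "norm c = 1" "refl_in (facet_hyperplane v i) = arefl c b"
    using hyperplane_refl by blast
  have "refl_in (facet_hyperplane v i) \<circ> g = (\<lambda>x. (lrefl c \<circ> G) x + (lrefl c t + (2 * b) *\<^sub>R c))"
    using linear_lrefl[of c] by (auto simp: cb Gt arefl_lrefl linear_add)
  moreover have "linear (lrefl c \<circ> G)" using Gt(1) linear_lrefl by (rule linear_compose)
  moreover have "inj (lrefl c)"
    by (rule inj_on_inverseI[where g="lrefl c"]) (simp add: lrefl_invol cb)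
  then have "inj (lrefl c \<circ> G)" using Gt(2) by (rule inj_compose)
  ultimately show ?case by blast
qed

lemma fix_prod:
  assumes "\<forall>i\<in>set ts. c i \<bullet> p = b i"
  shows "prod_maps (map (\<lambda>i. arefl (c i) (b i)) ts) (p + z) = p + prod_maps (map lrefl (map c ts)) z"
  using assms
proof (induction ts arbitrary: z)
  case Nil then show ?case by simp
next
  case (Cons i ts)
  then have e: "c i \<bullet> p = b i" by simp
  have "arefl (c i) (b i) (p + y) = p + lrefl (c i) y" for y
    using e by (simp add: arefl_def lrefl_eq inner_add_right algebra_simps)
  then show ?case using Cons by simp
qed

lemma core:
  fixes c :: "nat \<Rightarrow> 'a::euclidean_space" and b :: "nat \<Rightarrow> real" and u :: "nat \<Rightarrow> 'a"
  assumes nc: "\<forall>i\<le>DIM('a). norm (c i) = 1"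
    and hin: "\<forall>i\<le>DIM('a). \<forall>k\<le>DIM('a). k \<noteq> i \<longrightarrow> c i \<bullet> u k = b i"
    and hout: "\<forall>i\<le>DIM('a). c i \<bullet> u i \<noteq> b i"
    and j: "j \<le> DIM('a)" and tau: "distinct \<tau>" "set \<tau> = {..DIM('a)} - {j}"
    and w: "w = prod_maps (map (\<lambda>i. arefl (c i) (b i)) (j # \<tau>))"
  shows "hyperbolic w
    \<and> (affine_hyperplane (Mov w) \<and> 0 \<notin> Mov w)
    \<and> is_line (Min_set w)
    \<and> (\<forall>rs. (\<forall>r\<in>set rs. is_reflection r) \<and> prod_maps rs = w \<longrightarrow> length (j # \<tau>) \<le> length rs)"
proof -
  define J where "J = {..DIM('a)} - {j}"
  define p where "p = u j"
  define L' where "L' = prod_maps (map lrefl (map c \<tau>))"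
  define cj where "cj = c j"
  define L where "L = (\<lambda>z. lrefl cj (L' z))"
  define h where "h = cj \<bullet> p - b j"
  have ncj: "norm cj = 1" using nc j by (simp add: cj_def)
  have h0: "h \<noteq> 0" using hout j by (simp add: h_def cj_def p_def)
  have ncs: "\<forall>x\<in>set (map c \<tau>). norm x = 1" using nc tau by auto
  have linL': "linear L'" unfolding L'_def by (rule linear_prod_lrefl)
  have linL: "linear L" unfolding L_def using linear_compose[OF linL' linear_lrefl[of cj]] by (simp add: comp_def)
  have innL': "L' x \<bullet> L' y = x \<bullet> y" for x y unfolding L'_def by (rule inner_prod_lrefl[OF ncs])
  have innL: "L x \<bullet> L y = x \<bullet> y" for x y unfolding L_def using lrefl_inner[OF ncj] innL' by simp
  have pfix: "\<forall>i\<in>set \<tau>. c i \<bullet> p = b i" using hin tau j by (auto simp: p_def)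
  have wform: "w (p + z) = p + L z - (2 * h) *\<^sub>R cj" for z
  proof -
    have "w (p + z) = arefl cj (b j) (p + L' z)"
      using fix_prod[OF pfix, of z] by (simp add: w L'_def cj_def)
    also have "\<dots> = p + L z - (2 * h) *\<^sub>R cj"
      by (simp add: arefl_def L_def lrefl_eq h_def inner_add_right algebra_simps)
    finally show ?thesis .
  qed
  have wform2: "w x = p + L (x - p) - (2 * h) *\<^sub>R cj" for x
    using wform[of "x - p"] by simp
  define e where "e k = u k - p" for k
  have cek0: "c i \<bullet> e k = 0" if "i \<in> J" "k \<in> J" "i \<noteq> k" for i k
    using that hin j unfolding J_def e_def p_def by (auto simp: inner_diff_right)
  have cek1: "c k \<bullet> e k \<noteq> 0" if "k \<in> J" for k
    using that hin hout j unfolding J_def e_def p_def by (auto simp: inner_diff_right)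
  have injc: "inj_on c J"
  proof (rule inj_onI)
    fix i k assume ik: "i \<in> J" "k \<in> J" "c i = c k"
    show "i = k"
    proof (rule ccontr)
      assume "i \<noteq> k"
      then have "c i \<bullet> e k = 0" using cek0 ik by blast
      then show False using cek1[OF ik(2)] ik(3) by simp
    qed
  qed
  have finJ: "finite J" by (simp add: J_def)
  have indep: "independent (c ` J)"
  proof
    assume "dependent (c ` J)"
    then obtain a where a: "\<exists>x\<in>c ` J. a x \<noteq> 0" "(\<Sum>x\<in>c ` J. a x *\<^sub>R x) = 0"
      using real_vector.dependent_finite[of "c ` J"] finJ by auto
    then obtain k where k: "k \<in> J" "a (c k) \<noteq> 0" by auto
    have "(\<Sum>i\<in>J. a (c i) *\<^sub>R c i) = 0"
      using a(2) by (simp add: sum.reindex[OF injc])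
    then have "(\<Sum>i\<in>J. a (c i) *\<^sub>R c i) \<bullet> e k = 0" by simp
    then have "(\<Sum>i\<in>J. a (c i) * (c i \<bullet> e k)) = 0" by (simp add: inner_sum_left)
    moreover have "(\<Sum>i\<in>J. a (c i) * (c i \<bullet> e k)) = a (c k) * (c k \<bullet> e k)"
    proof -
      have "(\<Sum>i\<in>J. a (c i) * (c i \<bullet> e k)) = a (c k) * (c k \<bullet> e k) + (\<Sum>i\<in>J-{k}. a (c i) * (c i \<bullet> e k))"
        by (rule sum.remove[OF finJ k(1)])
      moreover have "(\<Sum>i\<in>J-{k}. a (c i) * (c i \<bullet> e k)) = 0"
        by (rule sum.neutral) (use cek0 k in auto)
      ultimately show ?thesis by simp
    qed
    ultimately show False using k cek1 by simp
  qed
  have cardJ: "card J = DIM('a)" using j by (simp add: J_def)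
  have cardcJ: "card (c ` J) = DIM('a)" using card_image[OF injc] cardJ by simp
  have "UNIV \<subseteq> span (c ` J)"
    using card_eq_dim[of "c ` J" UNIV] indep cardcJ finJ by (simp add: dim_UNIV)
  then have spanU: "span (c ` J) = UNIV" by auto
  have setct: "set (map c \<tau>) = c ` J" using tau by (simp add: J_def)
  have distct: "distinct (map c \<tau>)" using tau injc by (simp add: distinct_map J_def)
  have F1: "f = 0" if "L' f = f" for f
  proof -
    have ind2: "independent (set (map c \<tau>))" using indep setct by simp
    have "\<forall>x\<in>set (map c \<tau>). x \<bullet> f = 0"
      by (rule carter[OF distct ind2 that[unfolded L'_def]])
    then show ?thesis using orth_span_UNIV[of "set (map c \<tau>)" f] spanU setct by simp
  qed
  have linM: "linear (\<lambda>z. L' z - z)"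
    by (rule linear_compose_sub[OF linL' linearI]) auto
  have "inj (\<lambda>z. L' z - z)"
    using linear_injective_0[OF linM] F1 by simp
  then have "surj (\<lambda>z. L' z - z)" using linM eucl.linear_inj_imp_surj by blast
  from surjD[OF this, of cj] obtain y where y: "L' y - y = cj" by (metis (no_types))
  have L'y: "L' y = y + cj" by (simp add: y[symmetric])
  have yc: "y \<bullet> cj = - 1/2"
  proof -
    have cc: "cj \<bullet> cj = 1" using ncj by (simp add: norm_eq_1)
    have "(y + cj) \<bullet> (y + cj) = y \<bullet> y" using innL'[of y y] L'y by simp
    then have "y \<bullet> y + 2 * (y \<bullet> cj) + cj \<bullet> cj = y \<bullet> y"
      by (simp add: inner_add_left inner_add_right inner_commute)
    then show ?thesis using cc by simp
  qed
  have Ly: "L y = y"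
  proof -
    have cc: "cj \<bullet> cj = 1" using ncj by (simp add: norm_eq_1)
    have "L y = (y + cj) - (2 * (cj \<bullet> (y + cj))) *\<^sub>R cj" by (simp add: L_def L'y lrefl_eq)
    moreover have "cj \<bullet> (y + cj) = 1/2" using yc cc by (simp add: inner_add_right inner_commute)
    ultimately show ?thesis by simp
  qed
  have y0: "y \<noteq> 0" using yc by auto
  have F3: "f = (- 2 * (cj \<bullet> f)) *\<^sub>R y" if Lf: "L f = f" for f
  proof -
    define g where "g = f + (2 * (cj \<bullet> f)) *\<^sub>R y"
    have "L g = L f + (2 * (cj \<bullet> f)) *\<^sub>R L y"
      unfolding g_def by (simp only: linear_add[OF linL] linear_scale[OF linL])
    then have Lg: "L g = g" unfolding g_def by (simp only: Lf Ly)
    have cg: "cj \<bullet> g = 0" unfolding g_def using yc by (simp add: inner_add_right inner_commute)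
    have "L' g = lrefl cj (L g)" unfolding L_def by (simp add: lrefl_invol[OF ncj])
    also have "\<dots> = g" using Lg cg by (simp add: lrefl_eq)
    finally have "g = 0" by (rule F1)
    have "f = g - (2 * (cj \<bullet> f)) *\<^sub>R y" by (simp add: g_def)
    then show ?thesis using \<open>g = 0\<close> by simp
  qed
  have F4: "(L z - z) \<bullet> f = 0" if "L f = f" for z f
  proof -
    have "L z \<bullet> f = z \<bullet> f" using innL[of z f] that by simp
    then show ?thesis by (simp add: inner_diff_left)
  qed
  have Schar: "(\<exists>z. L z - z = x) \<longleftrightarrow> y \<bullet> x = 0" for x
  proof
    assume "\<exists>z. L z - z = x"
    then show "y \<bullet> x = 0" using F4[OF Ly] by (auto simp: inner_commute)
  next
    assume yx: "y \<bullet> x = 0"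
    define R where "R = range (\<lambda>z. L z - z)"
    have linN: "linear (\<lambda>z. L z - z)"
      by (rule linear_compose_sub[OF linL linearI]) auto
    have subR: "subspace R" unfolding R_def
      by (rule real_vector.linear_subspace_image[OF linN subspace_UNIV])
    obtain s q where sq: "s \<in> span R" "\<And>w. w \<in> span R \<Longrightarrow> orthogonal q w" "x = s + q"
      using orthogonal_subspace_decomp_exists[of R x] by blast
    have eqR: "span R = R" using subR by (rule span_eq_iff[THEN iffD2])
    have sR: "s \<in> R" using sq(1) unfolding eqR .
    have qperp: "q \<bullet> (L z - z) = 0" for z
    proof -
      have "L z - z \<in> span R" unfolding R_def by (rule span_base) blast
      then show ?thesis using sq(2) by (simp add: orthogonal_def)
    qed
    have Lq: "L q = q"
    proof -
      have a: "q \<bullet> L q = q \<bullet> q" using qperp[of q] by (simp add: inner_diff_right)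
      have "(L q - q) \<bullet> (L q - q) = L q \<bullet> L q - 2 * (q \<bullet> L q) + q \<bullet> q"
        by (simp add: inner_diff_left inner_diff_right inner_commute)
      also have "\<dots> = 0" using a innL[of q q] by simp
      finally show ?thesis by simp
    qed
    define k where "k = - 2 * (cj \<bullet> q)"
    have qk: "q = k *\<^sub>R y" using F3[OF Lq] by (simp add: k_def)
    have "q \<bullet> x = k * (y \<bullet> x)" by (subst qk) simp
    then have "q \<bullet> x = 0" using yx by simp
    moreover have "q \<bullet> s = 0" using sq(2)[OF sq(1)] by (simp add: orthogonal_def)
    ultimately have "q \<bullet> q = 0" using sq(3) by (simp add: inner_add_right)
    then have "x = s" using sq(3) by simp
    with sR show "\<exists>z. L z - z = x" by (auto simp: R_def)
  qed
  have wx: "w x = x + d \<longleftrightarrow> L (x - p) - (x - p) = d + (2 * h) *\<^sub>R cj" for x d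
  proof -
    have "w x = x + d \<longleftrightarrow> p + L (x - p) - (2 * h) *\<^sub>R cj = x + d" using wform2[of x] by simp
    also have "\<dots> \<longleftrightarrow> L (x - p) - (x - p) = d + (2 * h) *\<^sub>R cj"
      by (auto simp: algebra_simps)
    finally show ?thesis .
  qed
  have MovEq: "Mov w = {d. y \<bullet> d = h}"
  proof -
    have "d \<in> Mov w \<longleftrightarrow> (\<exists>z. L z - z = d + (2 * h) *\<^sub>R cj)" for d
    proof
      assume "d \<in> Mov w"
      then obtain x where "w x = x + d" by (auto simp: Mov_def)
      then show "\<exists>z. L z - z = d + (2 * h) *\<^sub>R cj" using wx by blast
    next
      assume "\<exists>z. L z - z = d + (2 * h) *\<^sub>R cj"
      then obtain z where "L z - z = d + (2 * h) *\<^sub>R cj" by blast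
      then have "w (p + z) = (p + z) + d" using wx[of "p + z" d] by simp
      then show "d \<in> Mov w" by (auto simp: Mov_def)
    qed
    also have "\<dots> d \<longleftrightarrow> y \<bullet> d = h" for d
      using Schar[of "d + (2 * h) *\<^sub>R cj"] yc by (simp add: inner_add_right)
    finally show ?thesis by auto
  qed
  have hyp: "hyperbolic w"
    unfolding hyperbolic_def
  proof
    fix x show "w x \<noteq> x"
    proof
      assume "w x = x"
      then have "0 \<in> Mov w" by (auto simp: Mov_def intro: exI[of _ x])
      then show False using MovEq h0 by simp
    qed
  qed
  have ahyp: "affine_hyperplane (Mov w) \<and> 0 \<notin> Mov w"
    using MovEq y0 h0 by (simp add: affine_hyperplane_def affine_hyperplane)
  define M where "M = {d. y \<bullet> d = h}"
  define ds where "ds = closest_point M 0"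
  have yy: "y \<bullet> y \<noteq> 0" using y0 by simp
  define d1 where "d1 = (h / (y \<bullet> y)) *\<^sub>R y"
  have d1M: "d1 \<in> M" using yy by (simp add: M_def d1_def)
  have cvM: "convex M" unfolding M_def by (rule convex_hyperplane)
  have clM: "closed M" unfolding M_def by (rule closed_hyperplane)
  have dsM: "ds \<in> M" unfolding ds_def using clM d1M by (intro closest_point_in_set) auto
  have MinEq: "x \<in> Min_set w \<longleftrightarrow> w x - x = ds" for x
  proof
    assume x: "x \<in> Min_set w"
    have "w x - x \<in> Mov w" unfolding Mov_def by (rule CollectI, rule exI[of _ x]) simp
    then have mem: "w x - x \<in> M" using MovEq by (simp add: M_def)
    have "\<forall>z\<in>M. dist 0 (w x - x) \<le> dist 0 z"
      using x MovEq by (auto simp: Min_set_def M_def)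
    then show "w x - x = ds" unfolding ds_def by (rule closest_point_unique[OF cvM clM mem])
  next
    assume x: "w x - x = ds"
    have "norm (w x - x) \<le> norm d" if "d \<in> M" for d
      using closest_point_le[OF clM that, of 0] x by (simp add: ds_def)
    then show "x \<in> Min_set w" using MovEq by (auto simp: Min_set_def M_def)
  qed
  have "y \<bullet> (ds + (2 * h) *\<^sub>R cj) = 0" using dsM yc by (simp add: M_def inner_add_right)
  then obtain z0 where z0: "L z0 - z0 = ds + (2 * h) *\<^sub>R cj" using Schar by blast
  have MinEq2: "Min_set w = (+) (p + z0) ` span {y}"
  proof (intro set_eqI iffI)
    fix x assume "x \<in> Min_set w"
    then have "w x = x + ds" using MinEq by (simp add: algebra_simps)
    then have e0: "L (x - p) - (x - p) = L z0 - z0" using wx z0 by simp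
    have e1: "L (x - p - z0) = L (x - p) - L z0" by (rule linear_diff[OF linL])
    have "L (x - p - z0) = x - p - z0"
      unfolding e1 using e0 by (simp add: algebra_simps)
    then have "x - p - z0 = (- 2 * (cj \<bullet> (x - p - z0))) *\<^sub>R y" by (rule F3)
    then have "x - (p + z0) \<in> span {y}"
      by (metis diff_diff_eq span_base span_mul singletonI)
    then show "x \<in> (+) (p + z0) ` span {y}"
      by (intro image_eqI[of _ _ "x - (p + z0)"]) auto
  next
    fix x assume "x \<in> (+) (p + z0) ` span {y}"
    then obtain t where t: "x = p + z0 + t" "t \<in> span {y}" by auto
    then obtain k where k: "t = k *\<^sub>R y" by (auto simp: span_singleton)
    have Lt: "L t = t" using k Ly by (simp add: linear_scale[OF linL])
    have "L (x - p) - (x - p) = L z0 - z0"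
      using Lt t(1) by (simp add: linear_add[OF linL] algebra_simps)
    then have "w x = x + ds" using wx z0 by simp
    then show "x \<in> Min_set w" using MinEq by (simp add: algebra_simps)
  qed
  have line: "is_line (Min_set w)"
  proof -
    have "affine (span {y})" by (rule subspace_imp_affine[OF subspace_span])
    then have "affine ((+) (p + z0) ` span {y})" using affine_translation by blast
    moreover have "aff_dim ((+) (p + z0) ` span {y}) = 1"
      using y0 by (simp add: aff_dim_translation_eq aff_dim_subspace[OF subspace_span] dim_span eucl.dim_singleton)
    ultimately show ?thesis by (simp add: is_line_def MinEq2)
  qed
  have lenJ: "length (j # \<tau>) = DIM('a) + 1"
    using distinct_card[OF tau(1)] tau(2) cardJ by (simp add: J_def)
  have rl: "length (j # \<tau>) \<le> length rs" if rs: "\<forall>r\<in>set rs. is_reflection r" "prod_maps rs = w" for rs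
  proof -
    obtain cbs where cbs: "rs = map (\<lambda>cb. arefl (fst cb) (snd cb)) cbs" "\<forall>cb\<in>set cbs. norm (fst cb) = 1"
      using refl_list[OF rs(1)] by blast
    define CS where "CS = fst ` set cbs"
    have wF: "w = prod_maps (map (\<lambda>cb. arefl (fst cb) (snd cb)) cbs)" using rs(2) cbs(1) by simp
    have MovS: "Mov w \<subseteq> span CS"
    proof
      fix d assume "d \<in> Mov w"
      then obtain x where "w x = x + d" by (auto simp: Mov_def)
      then have "d = w x - x" by simp
      then show "d \<in> span CS" using mov_prod_arefl[of cbs x] wF by (simp add: CS_def)
    qed
    have spanCS: "span CS = UNIV"
    proof (rule ccontr)
      assume "span CS \<noteq> UNIV"
      then obtain q where q: "q \<noteq> 0" "\<forall>x\<in>span CS. q \<bullet> x = 0"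
        using span_not_UNIV_orthogonal by blast
      have "d1 \<in> Mov w" using d1M MovEq by (simp add: M_def)
      then have "q \<bullet> d1 = 0" using q MovS by blast
      then have qy: "q \<bullet> y = 0" using yy h0 by (simp add: d1_def)
      have "d1 + q \<in> Mov w" using d1M MovEq qy by (simp add: M_def inner_add_right inner_commute)
      then have "q \<bullet> (d1 + q) = 0" using q MovS by blast
      then have "q \<bullet> q = 0" using \<open>q \<bullet> d1 = 0\<close> by (simp add: inner_add_right)
      then show False using q by simp
    qed
    have finCS: "finite CS" by (simp add: CS_def)
    have "DIM('a) \<le> card CS"
      using real_vector.dim_le_card[of UNIV CS] spanCS finCS by (simp add: dim_UNIV)
    moreover have cCS: "card CS \<le> length cbs"
      unfolding CS_def by (metis card_image_le card_length finite_set le_trans)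
    ultimately have le: "DIM('a) \<le> length cbs" by simp
    have "length cbs \<noteq> DIM('a)"
    proof
      assume eq: "length cbs = DIM('a)"
      then have cardCS: "card CS = DIM('a)" using \<open>DIM('a) \<le> card CS\<close> cCS by simp
      have indCS: "independent CS"
        using card_le_dim_spanning[of CS UNIV] spanCS finCS cardCS by (simp add: dim_UNIV)
      have setm: "set (map fst cbs) = CS" by (simp add: CS_def)
      have dist: "distinct (map fst cbs)"
        using cardCS eq setm by (intro card_distinct) simp
      define L2 where "L2 = prod_maps (map lrefl (map fst cbs))"
      have "L2 y = w y - w 0" using prod_arefl_affine[of cbs y] wF by (simp add: L2_def)
      also have "\<dots> = L (y - p) - L (0 - p)" using wform2[of y] wform2[of 0] by simp
      also have "\<dots> = L y" by (simp add: linear_diff[OF linL] linear_neg[OF linL])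
      finally have "L2 y = y" using Ly by simp
      have ind3: "independent (set (map fst cbs))" using indCS setm by simp
      have "\<forall>c\<in>set (map fst cbs). c \<bullet> y = 0"
        by (rule carter[OF dist ind3 \<open>L2 y = y\<close>[unfolded L2_def]])
      then have "\<forall>c\<in>CS. c \<bullet> y = 0" unfolding CS_def by auto
      then have "y = 0" using orth_span_UNIV[of CS y] spanCS by blast
      with y0 show False by simp
    qed
    with le have "DIM('a) + 1 \<le> length cbs" by simp
    then show ?thesis using lenJ cbs(1) by simp
  qed
  show ?thesis using hyp ahyp line rl by blast
qed

lemma main:
  fixes v :: "nat \<Rightarrow> 'a::euclidean_space" and w :: "'a \<Rightarrow> 'a"
  assumes sv: "is_simplex v" and sf: "simple_factorization v w g \<sigma>"
  shows "hyperbolic w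
    \<and> (affine_hyperplane (Mov w) \<and> 0 \<notin> Mov w)
    \<and> is_line (Min_set w)
    \<and> (\<forall>rs. (\<forall>r\<in>set rs. is_reflection r) \<and> prod_maps rs = w \<longrightarrow> length \<sigma> \<le> length rs)"
proof -
  let ?I = "{..DIM('a)}"
  from sf have g: "g \<in> refl_group v" and ds: "distinct \<sigma>" and ss: "set \<sigma> = ?I"
    and w: "w = prod_maps (map (simple_refl v g) \<sigma>)"
    by (auto simp: simple_factorization_def)
  obtain G t where Gt: "linear G" "inj G" "g = (\<lambda>x. G x + t)"
    using refl_group_affine[OF sv g] by blast
  define A where "A i = (\<lambda>x. G x + t) ` (affine hull (v ` (?I - {i})))" for i
  have Aeq: "affine hull (g ` facet v i) = A i" for i
    unfolding A_def Gt(3) by (rule facet_hull_eq[OF Gt(1)])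
  have "\<forall>i\<in>?I. \<exists>cb. norm (fst cb) = 1 \<and> A i = {x. fst cb \<bullet> x = snd cb} \<and> simple_refl v g i = arefl (fst cb) (snd cb)"
  proof
    fix i assume i: "i \<in> ?I"
    have "affine_hyperplane (A i)" unfolding A_def using facet_geom(1)[OF sv Gt(1,2), of i t] i by simp
    then obtain c b where "norm c = 1" "A i = {x. c \<bullet> x = b}" "refl_in (A i) = arefl c b"
      using hyperplane_refl by blast
    moreover have "simple_refl v g i = refl_in (A i)" by (simp add: simple_refl_def Aeq)
    ultimately show "\<exists>cb. norm (fst cb) = 1 \<and> A i = {x. fst cb \<bullet> x = snd cb} \<and> simple_refl v g i = arefl (fst cb) (snd cb)"
      by (intro exI[of _ "(c, b)"]) simp
  qed
  from bchoice[OF this] obtain f where f: "\<forall>i\<in>?I. norm (fst (f i)) = 1 \<and> A i = {x. fst (f i) \<bullet> x = snd (f i)} \<and> simple_refl v g i = arefl (fst (f i)) (snd (f i))"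
    by blast
  define c where "c i = fst (f i)" for i
  define b where "b i = snd (f i)" for i
  define u where "u k = G (v k) + t" for k
  have nc: "\<forall>i\<le>DIM('a). norm (c i) = 1" using f by (simp add: c_def)
  have hin: "\<forall>i\<le>DIM('a). \<forall>k\<le>DIM('a). k \<noteq> i \<longrightarrow> c i \<bullet> u k = b i"
  proof (intro allI impI)
    fix i k assume ik: "i \<le> DIM('a)" "k \<le> DIM('a)" "k \<noteq> i"
    have "u k \<in> A i" unfolding A_def u_def using facet_geom(2)[OF sv Gt(1,2) ik(1) ik(2,3)] .
    then show "c i \<bullet> u k = b i" using f ik by (auto simp: c_def b_def)
  qed
  have hout: "\<forall>i\<le>DIM('a). c i \<bullet> u i \<noteq> b i"
  proof (intro allI impI)
    fix i assume i: "i \<le> DIM('a)"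
    have "u i \<notin> A i" unfolding A_def u_def using facet_geom(3)[OF sv Gt(1,2) i] .
    then show "c i \<bullet> u i \<noteq> b i" using f i by (auto simp: c_def b_def)
  qed
  obtain j \<tau> where s: "\<sigma> = j # \<tau>" using ss by (cases \<sigma>) auto
  have j: "j \<le> DIM('a)" using ss s by auto
  have tau: "distinct \<tau>" "set \<tau> = ?I - {j}" using ds ss s by auto
  have "map (simple_refl v g) \<sigma> = map (\<lambda>i. arefl (c i) (b i)) \<sigma>"
  proof (rule map_cong[OF refl])
    fix i assume "i \<in> set \<sigma>"
    then have "i \<in> ?I" using ss by simp
    then show "simple_refl v g i = arefl (c i) (b i)" using f by (simp add: c_def b_def)
  qed
  then have w2: "w = prod_maps (map (\<lambda>i. arefl (c i) (b i)) (j # \<tau>))" using w s by (simp only:)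
  show ?thesis using core[OF nc hin hout j tau w2] s by simp
qed

theorem proposition7p2:
  fixes v :: "nat \<Rightarrow> 'a::euclidean_space" and w :: "'a \<Rightarrow> 'a"
  assumes "is_simplex v"
    and "angles_submultiples_of_pi v"
    and "acts_properly (refl_group v)"
    and "acts_cocompactly (refl_group v)"
    and "coxeter_element v w"
  shows "hyperbolic w
    \<and> (affine_hyperplane (Mov w) \<and> 0 \<notin> Mov w)
    \<and> is_line (Min_set w)
    \<and> (\<forall>g \<sigma>. simple_factorization v w g \<sigma> \<longrightarrow>
         (\<forall>rs. (\<forall>r\<in>set rs. is_reflection r) \<and> prod_maps rs = w \<longrightarrow> length \<sigma> \<le> length rs))"
proof -
  obtain g \<sigma> where sf: "simple_factorization v w g \<sigma>"
    using assms(5) by (auto simp: coxeter_element_def)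
  have part: "hyperbolic w \<and> (affine_hyperplane (Mov w) \<and> 0 \<notin> Mov w) \<and> is_line (Min_set w)"
    using main[OF assms(1) sf] by blast
  have "\<forall>g \<sigma>. simple_factorization v w g \<sigma> \<longrightarrow>
         (\<forall>rs. (\<forall>r\<in>set rs. is_reflection r) \<and> prod_maps rs = w \<longrightarrow> length \<sigma> \<le> length rs)"
    using main[OF assms(1)] by blast
  with part show ?thesis by blast
qed

end
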